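(* Let $d\ge 1$, $T\ge 1$, let $\mathcal{X}\subseteq\mathbb{R}^d$ be a non-empty closed convex set, and let $0<\mu\le L$. Let $f_1,\dots,f_T:\mathcal{X}\to[0,\infty)$ be differentiable with $\frac{\mu}{2}\|y-x\|^2\le f_t(y)-f_t(x)-\langle\nabla f_t(x),y-x\rangle\le\frac{L}{2}\|y-x\|^2$ for all $t$ and $x,y\in\mathcal{X}$. Let $x_1,\dots,x_T$ be the iterates of the OMGD algorithm with $K=\lceil\frac{L+\mu}{2\mu}\ln4\rceil$ from a starting point $x_0\in\mathcal{X}$. Then $$\sum_{t=2}^T\|x_t-x_{t-1}\|\le 3\|x_1-x_1^\star\|+3\mathcal{P}_T^\star.$$
   Context: $x_t^\star=\arg\min_{x\in\mathcal{X}}f_t(x)$ and $\mathcal{P}_T^\star=\sum_{t=2}^T\|x_t^\star-x_{t-1}^\star\|$. OMGD with parameter $K$: $x_1=x_0$; for $t=2,\dots,T$, $z_t^{(0)}=x_{t-1}$, $z_t^{(k)}=\Pi_{\mathcal{X}}\big(z_t^{(k-1)}-\frac1L\nabla f_{t-1}(z_t^{(k-1)})\big)$ ($k=1,\dots,K$), $x_t=z_t^{(K)}$, where $\Pi_{\mathcal{X}}$ is Euclidean projection onto $\mathcal{X}$. *)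

theory Defs
  imports "HOL-Analysis.Analysis"
begin

text \<open>Minimiser of f t over X (unique by strong convexity; chosen by SOME).\<close>
definition minimizer :: "'a set \<Rightarrow> ('a \<Rightarrow> real) \<Rightarrow> 'a" where
  "minimizer X h = (SOME x. x \<in> X \<and> (\<forall>y\<in>X. h x \<le> h y))"

definition omgd_step :: "'a::euclidean_space set \<Rightarrow> real \<Rightarrow> (nat \<Rightarrow> 'a \<Rightarrow> 'a) \<Rightarrow> nat \<Rightarrow> 'a \<Rightarrow> 'a" where
  "omgd_step X L g s z = closest_point X (z - (1 / L) *\<^sub>R g s z)"

fun omgd :: "'a::euclidean_space set \<Rightarrow> real \<Rightarrow> (nat \<Rightarrow> 'a \<Rightarrow> 'a) \<Rightarrow> nat \<Rightarrow> 'a \<Rightarrow> nat \<Rightarrow> 'a" where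
  "omgd X L g K x0 0 = x0"
| "omgd X L g K x0 (Suc 0) = x0"
| "omgd X L g K x0 (Suc (Suc n)) =
     ((omgd_step X L g (Suc n)) ^^ K) (omgd X L g K x0 (Suc n))"

end

theory Submission
  imports Defs
begin

lemma opt_cond:
  fixes X :: "'a::real_inner set" and F :: "'a \<Rightarrow> real"
  assumes cv: "convex X" and sX: "s \<in> X" and yX: "y \<in> X"
    and mn: "\<forall>w\<in>X. F s \<le> F w"
    and sm: "\<And>x y. x \<in> X \<Longrightarrow> y \<in> X \<Longrightarrow> F y - F x - G x \<bullet> (y - x) \<le> L / 2 * (norm (y - x))\<^sup>2"
    and L: "L > 0"
  shows "G s \<bullet> (y - s) \<ge> 0"
proof (rule ccontr)
  assume "\<not> ?thesis"
  then have a: "G s \<bullet> (y - s) < 0" by simp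
  then have "y \<noteq> s" by auto
  define c where "c = L / 2 * (norm (y - s))\<^sup>2"
  have c: "c > 0" using \<open>y \<noteq> s\<close> L by (simp add: c_def)
  define e where "e = min 1 (- (G s \<bullet> (y - s)) / (2 * c))"
  have e0: "e > 0" using a c by (simp add: e_def divide_neg_pos)
  have e1: "e \<le> 1" by (simp add: e_def)
  have e2: "c * e \<le> - (G s \<bullet> (y - s)) / 2"
  proof -
    have "e \<le> - (G s \<bullet> (y - s)) / (2 * c)" by (simp add: e_def)
    then have "c * e \<le> c * (- (G s \<bullet> (y - s)) / (2 * c))" using c by (intro mult_left_mono) auto
    also have "\<dots> = - (G s \<bullet> (y - s)) / 2" using c by (simp add: field_simps)
    finally show ?thesis .
  qed
  define w where "w = s + e *\<^sub>R (y - s)"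
  have "w = (1 - e) *\<^sub>R s + e *\<^sub>R y" by (simp add: w_def algebra_simps)
  then have wX: "w \<in> X" using convexD_alt[OF cv sX yX, of e] e0 e1 by simp
  have "F w - F s - G s \<bullet> (w - s) \<le> L / 2 * (norm (w - s))\<^sup>2" using sm[OF sX wX] .
  moreover have "G s \<bullet> (w - s) = e * (G s \<bullet> (y - s))" by (simp add: w_def)
  moreover have "L / 2 * (norm (w - s))\<^sup>2 = c * e * e" using e0
    by (simp add: w_def c_def power_mult_distrib power2_eq_square)
  moreover have "F s \<le> F w" using mn wX by auto
  ultimately have "0 \<le> e * (G s \<bullet> (y - s)) + c * e * e" by linarith
  also have "\<dots> = e * (G s \<bullet> (y - s) + c * e)" by (simp add: algebra_simps)
  also have "\<dots> < 0" using e0 e2 a by (intro mult_pos_neg) auto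
  finally show False by simp
qed

lemma step_contract:
  fixes X :: "'a::euclidean_space set" and F :: "'a \<Rightarrow> real"
  assumes cv: "convex X" and cl: "closed X" and sX: "s \<in> X" and zX: "z \<in> X"
    and mn: "\<forall>w\<in>X. F s \<le> F w"
    and sc: "\<And>x y. x \<in> X \<Longrightarrow> y \<in> X \<Longrightarrow> \<mu> / 2 * (norm (y - x))\<^sup>2 \<le> F y - F x - G x \<bullet> (y - x)"
    and sm: "\<And>x y. x \<in> X \<Longrightarrow> y \<in> X \<Longrightarrow> F y - F x - G x \<bullet> (y - x) \<le> L / 2 * (norm (y - x))\<^sup>2"
    and L: "L > 0"
  shows "(L + \<mu>) * (norm (closest_point X (z - (1 / L) *\<^sub>R G z) - s))\<^sup>2 \<le> (L - \<mu>) * (norm (z - s))\<^sup>2"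
proof -
  define p where "p = closest_point X (z - (1 / L) *\<^sub>R G z)"
  have ne: "X \<noteq> {}" using sX by auto
  have pX: "p \<in> X" unfolding p_def by (rule closest_point_in_set[OF cl ne])
  have proj: "inner ((z - (1 / L) *\<^sub>R G z) - p) (s - p) \<le> 0"
    unfolding p_def
    by (rule any_closest_point_dot[OF cv cl closest_point_in_set[OF cl ne] sX])
       (use closest_point_le[OF cl] in auto)
  define u where "u = z - s"
  define v where "v = p - s"
  define a where "a = u \<bullet> u"
  define b where "b = v \<bullet> v"
  define c where "c = u \<bullet> v"
  have h1: "F p - F z - G z \<bullet> (p - z) \<le> L / 2 * (a + b - 2 * c)"
  proof -
    have "(norm (p - z))\<^sup>2 = a + b - 2 * c"
      unfolding a_def b_def c_def u_def v_def power2_norm_eq_inner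
      by (simp add: inner_diff inner_commute algebra_simps)
    then show ?thesis using sm[OF zX pX] by simp
  qed
  have h2: "\<mu> / 2 * a \<le> F s - F z - G z \<bullet> (s - z)"
    using sc[OF zX sX] by (simp add: a_def u_def power2_norm_eq_inner norm_minus_commute)
      (metis inner_diff_left inner_diff_right inner_commute minus_diff_eq inner_minus_left inner_minus_right)
  have h3: "\<mu> / 2 * b \<le> F p - F s - G s \<bullet> (p - s)"
    using sc[OF sX pX] by (simp add: b_def v_def power2_norm_eq_inner)
  have h4: "G s \<bullet> (p - s) \<ge> 0" by (rule opt_cond[OF cv sX pX mn sm L])
  have h5: "G z \<bullet> (p - s) \<le> L * (c - b)"
  proof -
    have "inner (z - p) (s - p) - (1 / L) * (G z \<bullet> (s - p)) \<le> 0"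
      using proj by (simp add: inner_diff_left algebra_simps)
    moreover have "inner (z - p) (s - p) = b - c"
      unfolding b_def c_def u_def v_def by (simp add: inner_diff inner_commute algebra_simps)
    moreover have "G z \<bullet> (s - p) = - (G z \<bullet> (p - s))"
      by (metis inner_minus_right minus_diff_eq)
    ultimately have "b - c + (1 / L) * (G z \<bullet> (p - s)) \<le> 0" by simp
    then have "L * (b - c + (1 / L) * (G z \<bullet> (p - s))) \<le> 0" using L
      by (simp add: mult_nonneg_nonpos)
    then show ?thesis using L by (simp add: algebra_simps)
  qed
  have h6: "G z \<bullet> (p - z) + G z \<bullet> (z - s) = G z \<bullet> (p - s)"
    by (simp add: inner_diff_right)
  have h7: "G z \<bullet> (s - z) = - (G z \<bullet> (z - s))"
    by (metis inner_minus_right minus_diff_eq)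
  have "(L + \<mu>) * b \<le> (L - \<mu>) * a"
    using h1 h2 h3 h4 h5 h6 h7 by (simp add: algebra_simps)
  then show ?thesis
    by (simp add: p_def[symmetric] a_def b_def u_def v_def power2_norm_eq_inner)
qed


lemma iter_contract:
  fixes X :: "'a::euclidean_space set" and F :: "'a \<Rightarrow> real"
  assumes cv: "convex X" and cl: "closed X" and sX: "s \<in> X"
    and mn: "\<forall>w\<in>X. F s \<le> F w"
    and sc: "\<And>x y. x \<in> X \<Longrightarrow> y \<in> X \<Longrightarrow> \<mu> / 2 * (norm (y - x))\<^sup>2 \<le> F y - F x - G x \<bullet> (y - x)"
    and sm: "\<And>x y. x \<in> X \<Longrightarrow> y \<in> X \<Longrightarrow> F y - F x - G x \<bullet> (y - x) \<le> L / 2 * (norm (y - x))\<^sup>2"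
    and mu: "0 < \<mu>" "\<mu> \<le> L"
  shows "z \<in> X \<Longrightarrow> ((\<lambda>w. closest_point X (w - (1 / L) *\<^sub>R G w)) ^^ n) z \<in> X \<and>
     (norm (((\<lambda>w. closest_point X (w - (1 / L) *\<^sub>R G w)) ^^ n) z - s))\<^sup>2
       \<le> ((L - \<mu>) / (L + \<mu>)) ^ n * (norm (z - s))\<^sup>2"
proof (induction n)
  case 0
  then show ?case by simp
next
  case (Suc n)
  define w where "w = ((\<lambda>w. closest_point X (w - (1 / L) *\<^sub>R G w)) ^^ n) z"
  have wX: "w \<in> X" and wb: "(norm (w - s))\<^sup>2 \<le> ((L - \<mu>) / (L + \<mu>)) ^ n * (norm (z - s))\<^sup>2"
    using Suc by (auto simp: w_def)
  have ne: "X \<noteq> {}" using sX by auto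
  have L: "L > 0" using mu by linarith
  have c: "(L + \<mu>) * (norm (closest_point X (w - (1 / L) *\<^sub>R G w) - s))\<^sup>2 \<le> (L - \<mu>) * (norm (w - s))\<^sup>2"
    by (rule step_contract[OF cv cl sX wX mn sc sm L])
  have q0: "(L - \<mu>) / (L + \<mu>) \<ge> 0" using mu by auto
  have "(norm (closest_point X (w - (1 / L) *\<^sub>R G w) - s))\<^sup>2 \<le> (L - \<mu>) / (L + \<mu>) * (norm (w - s))\<^sup>2"
    using c mu by (simp add: field_simps)
  also have "\<dots> \<le> (L - \<mu>) / (L + \<mu>) * (((L - \<mu>) / (L + \<mu>)) ^ n * (norm (z - s))\<^sup>2)"
    by (rule mult_left_mono[OF wb q0])
  finally show ?case using closest_point_in_set[OF cl ne]
    by (simp add: w_def[symmetric] mult.assoc)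
qed

lemma q_pow:
  fixes \<mu> L :: real
  assumes "0 < \<mu>" "\<mu> \<le> L"
  shows "((L - \<mu>) / (L + \<mu>)) ^ (nat \<lceil>(L + \<mu>) / (2 * \<mu>) * ln 4\<rceil>) \<le> 1 / 4"
proof -
  define a where "a = 2 * \<mu> / (L + \<mu>)"
  define K where "K = nat \<lceil>(L + \<mu>) / (2 * \<mu>) * ln 4\<rceil>"
  have q: "(L - \<mu>) / (L + \<mu>) = 1 - a" using assms by (simp add: a_def field_simps)
  have a0: "a > 0" "a \<le> 1" using assms by (auto simp: a_def field_simps)
  have Kr: "real K \<ge> (L + \<mu>) / (2 * \<mu>) * ln 4"
    unfolding K_def by linarith
  have "a * real K \<ge> a * ((L + \<mu>) / (2 * \<mu>) * ln 4)"
    using Kr a0 by (intro mult_left_mono) auto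
  moreover have "a * ((L + \<mu>) / (2 * \<mu>) * ln 4) = ln 4"
  proof -
    have "L + \<mu> > 0" using assms by linarith
    then show ?thesis using assms by (simp add: a_def)
  qed
  ultimately have aK: "a * real K \<ge> ln 4" by simp
  have "(1 - a) ^ K \<le> exp (- a) ^ K"
    using a0 by (intro power_mono) (use exp_ge_add_one_self[of "-a"] in auto)
  also have "\<dots> = exp (- (a * real K))" by (simp add: exp_of_nat_mult[symmetric] algebra_simps)
  also have "\<dots> \<le> exp (- ln 4)" using aK by simp
  also have "\<dots> = 1 / 4" by (simp add: exp_minus)
  finally show ?thesis using q by (simp add: K_def)
qed

lemma min_exists:
  fixes X :: "'a::euclidean_space set" and F :: "'a \<Rightarrow> real"
  assumes cl: "closed X" and x0: "x0 \<in> X" and ct: "continuous_on X F"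
    and sc: "\<And>x y. x \<in> X \<Longrightarrow> y \<in> X \<Longrightarrow> \<mu> / 2 * (norm (y - x))\<^sup>2 \<le> F y - F x - G x \<bullet> (y - x)"
    and mu: "\<mu> > 0"
  shows "\<exists>m\<in>X. \<forall>y\<in>X. F m \<le> F y"
proof -
  define R where "R = 2 * norm (G x0) / \<mu> + 1"
  define S where "S = X \<inter> cball x0 R"
  have R0: "R > 0" using mu by (simp add: R_def add_nonneg_pos)
  have "compact S" unfolding S_def using cl by auto
  moreover have "S \<noteq> {}" using x0 R0 by (auto simp: S_def)
  moreover have "continuous_on S F" using ct by (rule continuous_on_subset) (auto simp: S_def)
  ultimately obtain m where mS: "m \<in> S" and mm: "\<forall>y\<in>S. F m \<le> F y"
    using continuous_attains_inf by blast
  have x0S: "x0 \<in> S" using x0 R0 by (auto simp: S_def)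
  show ?thesis
  proof (intro bexI ballI)
    show "m \<in> X" using mS by (simp add: S_def)
    fix y assume yX: "y \<in> X"
    show "F m \<le> F y"
    proof (cases "y \<in> S")
      case True then show ?thesis using mm by auto
    next
      case False
      define r where "r = norm (y - x0)"
      have rR: "r > R" using False yX by (auto simp: S_def r_def dist_norm norm_minus_commute)
      have cs: "- (G x0 \<bullet> (y - x0)) \<le> norm (G x0) * r"
        using norm_cauchy_schwarz[of "- G x0" "y - x0"] by (simp add: r_def)
      have "\<mu> * r > 2 * norm (G x0)"
      proof -
        have "\<mu> * r > \<mu> * R" using rR mu by simp
        also have "\<mu> * R = 2 * norm (G x0) + \<mu>" using mu by (simp add: R_def field_simps)
        finally show ?thesis using mu by linarith
      qed
      then have "r * (\<mu> / 2 * r - norm (G x0)) > 0" using rR R0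
        by (intro mult_pos_pos) auto
      then have pos: "\<mu> / 2 * r\<^sup>2 - norm (G x0) * r > 0" by (simp add: algebra_simps power2_eq_square)
      have "F y \<ge> F x0 + G x0 \<bullet> (y - x0) + \<mu> / 2 * r\<^sup>2" using sc[OF x0 yX] by (simp add: r_def)
      then have "F y > F x0" using cs pos by linarith
      moreover have "F m \<le> F x0" using mm x0S by auto
      ultimately show ?thesis by simp
    qed
  qed
qed


theorem lemma12:
  fixes X :: "'a::euclidean_space set"
    and f :: "nat \<Rightarrow> 'a \<Rightarrow> real"
    and g :: "nat \<Rightarrow> 'a \<Rightarrow> 'a"
    and \<mu> L :: real and T :: nat and x0 :: 'a
  assumes "T \<ge> 1"
    and "X \<noteq> {}" and "closed X" and "convex X"
    and "0 < \<mu>" and "\<mu> \<le> L"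
    and nonneg: "\<And>t x. t \<in> {1..T} \<Longrightarrow> x \<in> X \<Longrightarrow> f t x \<ge> 0"
    and grad: "\<And>t x. t \<in> {1..T} \<Longrightarrow> x \<in> X \<Longrightarrow>
               (f t has_derivative (\<lambda>h. g t x \<bullet> h)) (at x within X)"
    and sc: "\<And>t x y. t \<in> {1..T} \<Longrightarrow> x \<in> X \<Longrightarrow> y \<in> X \<Longrightarrow>
               \<mu> / 2 * (norm (y - x))\<^sup>2 \<le> f t y - f t x - g t x \<bullet> (y - x)"
    and sm: "\<And>t x y. t \<in> {1..T} \<Longrightarrow> x \<in> X \<Longrightarrow> y \<in> X \<Longrightarrow>
               f t y - f t x - g t x \<bullet> (y - x) \<le> L / 2 * (norm (y - x))\<^sup>2"
    and "x0 \<in> X"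
  shows "(\<Sum>t = 2..T. norm (omgd X L g (nat \<lceil>(L + \<mu>) / (2 * \<mu>) * ln 4\<rceil>) x0 t
                           - omgd X L g (nat \<lceil>(L + \<mu>) / (2 * \<mu>) * ln 4\<rceil>) x0 (t - 1)))
         \<le> 3 * norm (omgd X L g (nat \<lceil>(L + \<mu>) / (2 * \<mu>) * ln 4\<rceil>) x0 1 - minimizer X (f 1))
           + 3 * (\<Sum>t = 2..T. norm (minimizer X (f t) - minimizer X (f (t - 1))))"
proof -
  define K where "K = nat \<lceil>(L + \<mu>) / (2 * \<mu>) * ln 4\<rceil>"
  define x where "x = omgd X L g K x0"
  define s where "s t = minimizer X (f t)" for t
  define \<delta> where "\<delta> t = norm (x t - s t)" for t
  define P where "P n = (\<Sum>t = 2..n. norm (s t - s (t - 1)))" for n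
  define E where "E n = (\<Sum>t = 2..n. norm (x t - x (t - 1)))" for n
  have L0: "L > 0" using assms by linarith
  have s_prop: "s t \<in> X \<and> (\<forall>y\<in>X. f t (s t) \<le> f t y)" if t: "t \<in> {1..T}" for t
  proof -
    have ct: "continuous_on X (f t)"
      unfolding continuous_on_eq_continuous_within
      using grad[OF t] has_derivative_continuous by blast
    have "\<exists>m\<in>X. \<forall>y\<in>X. f t m \<le> f t y"
      by (rule min_exists[OF \<open>closed X\<close> \<open>x0 \<in> X\<close> ct sc[OF t] \<open>0 < \<mu>\<close>])
    then have "\<exists>m. m \<in> X \<and> (\<forall>y\<in>X. f t m \<le> f t y)" by blast
    then show ?thesis unfolding s_def minimizer_def by (rule someI_ex)
  qed
  have stepX: "\<And>n z. z \<in> X \<Longrightarrow> (omgd_step X L g t ^^ n) z \<in> X" for t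
  proof -
    fix n z assume "z \<in> X"
    then show "(omgd_step X L g t ^^ n) z \<in> X"
      by (induction n) (auto simp: omgd_step_def intro: closest_point_in_set[OF \<open>closed X\<close> \<open>X \<noteq> {}\<close>])
  qed
  have xX2: "x n \<in> X \<and> x (Suc n) \<in> X" for n
    by (induction n) (auto simp: x_def \<open>x0 \<in> X\<close> stepX)
  have xX: "x n \<in> X" for n using xX2 by blast
  have half: "norm ((omgd_step X L g t ^^ K) z - s t) \<le> norm (z - s t) / 2"
    if t: "t \<in> {1..T}" and zX: "z \<in> X" for t z
  proof -
    have eq: "omgd_step X L g t = (\<lambda>w. closest_point X (w - (1 / L) *\<^sub>R g t w))"
      by (simp add: omgd_step_def fun_eq_iff)
    have "(norm ((omgd_step X L g t ^^ K) z - s t))\<^sup>2 \<le> ((L - \<mu>) / (L + \<mu>)) ^ K * (norm (z - s t))\<^sup>2"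
      unfolding eq
      using iter_contract[OF \<open>convex X\<close> \<open>closed X\<close> conjunct1[OF s_prop[OF t]] conjunct2[OF s_prop[OF t]]
          sc[OF t] sm[OF t] \<open>0 < \<mu>\<close> \<open>\<mu> \<le> L\<close> zX] by blast
    also have "\<dots> \<le> 1 / 4 * (norm (z - s t))\<^sup>2"
      using q_pow[OF \<open>0 < \<mu>\<close> \<open>\<mu> \<le> L\<close>] by (intro mult_right_mono) (auto simp: K_def)
    also have "\<dots> = (norm (z - s t) / 2)\<^sup>2" by (simp add: power2_eq_square)
    finally show ?thesis by (rule power2_le_imp_le) simp
  qed
  have contr: "norm (x (Suc n) - s n) \<le> \<delta> n / 2" if "1 \<le> n" "Suc n \<le> T" for n
  proof -
    define m where "m = n - 1"
    have n: "n = Suc m" using that(1) unfolding m_def by linarith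
    have e: "x (Suc n) = (omgd_step X L g n ^^ K) (x n)" by (simp add: x_def n)
    have nT: "n \<in> {1..T}" using that by simp
    show ?thesis unfolding e \<delta>_def by (rule half[OF nT xX])
  qed
  have inv: "E n + 3 * \<delta> n \<le> 3 * \<delta> 1 + 3 * P n" if "1 \<le> n" "n \<le> T" for n
    using that
  proof (induction n)
    case 0 then show ?case by simp
  next
    case (Suc n)
    show ?case
    proof (cases "n = 0")
      case True then show ?thesis by (simp add: E_def P_def)
    next
      case False
      then have n1: "1 \<le> n" by simp
      have IH: "E n + 3 * \<delta> n \<le> 3 * \<delta> 1 + 3 * P n" using Suc n1 by simp
      have c: "norm (x (Suc n) - s n) \<le> \<delta> n / 2" using contr[OF n1 Suc(3)] .
      have a1: "norm (x (Suc n) - x n) \<le> norm (x (Suc n) - s n) + \<delta> n"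
        unfolding \<delta>_def using norm_triangle_ineq[of "x (Suc n) - s n" "s n - x n"]
        by (simp add: norm_minus_commute)
      have a2: "\<delta> (Suc n) \<le> norm (x (Suc n) - s n) + norm (s (Suc n) - s n)"
        unfolding \<delta>_def using norm_triangle_ineq[of "x (Suc n) - s n" "s n - s (Suc n)"]
        by (simp add: norm_minus_commute)
      have "E (Suc n) = E n + norm (x (Suc n) - x n)" using n1 by (simp add: E_def)
      moreover have "P (Suc n) = P n + norm (s (Suc n) - s n)" using n1 by (simp add: P_def)
      ultimately show ?thesis using IH c a1 a2 by linarith
    qed
  qed
  have "E T \<le> 3 * \<delta> 1 + 3 * P T"
    using inv[OF \<open>T \<ge> 1\<close> order_refl] norm_ge_zero[of "x T - s T"] unfolding \<delta>_def by linarith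
  then show ?thesis by (simp add: E_def P_def \<delta>_def x_def s_def K_def)
qed

end
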